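(* Let $L\subseteq B_i$ be an SINR-feasible set of links in a bucket $B_i$, let $e\in B_i$, and let $L^\ell=\{e'\in L:d_{e'}\le d_{e'e}\}$. Then $\sum_{e'\in L^\ell}\bar a_{e'}(e)\le C$ for a constant $C$ depending only on $\alpha$ and $\varepsilon$.
   Context: Constants: $\alpha\ge0$, $N>0$, $\beta>0$. Nodes lie in the Euclidean plane. A link is $e=(s_e,r_e,P_e)$; $\mathcal{L}$ is the set of links. $d_e=d(s_e,r_e)$, $d_{e'e}=d(s_{e'},r_e)$, $S_e=P_e/d_e^\alpha$, $S_{e'e}=P_{e'}/d_{e'e}^\alpha$, $\gamma_e=\beta S_e/(S_e-\beta N)$, $\hat a_{e'}(e)=S_{e'e}/S_e$, $a_{e'}(e)=\gamma_e\hat a_{e'}(e)$, $\bar a_{e'}(e)=\min\{1,a_{e'}(e)\}$. $L$ is SINR-feasible if $S_e/(N+\sum_{e'\in L\setminus\{e\}}S_{e'e})\ge\beta$ for all $e\in L$. Buckets: $S_{\min}=\min_{e\in\mathcal{L}}S_e$, $B_i=\{e\in\mathcal{L}:2^iS_{\min}\le S_e<2^{i+1}S_{\min}\}$. Standing assumption: there is a constant $\varepsilon>0$ with $S_e/N\ge(1+\varepsilon)\beta$ for all $e\in\mathcal{L}$. *)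

theory Defs
  imports "HOL-Analysis.Analysis"
begin

type_synonym point = "real \<times> real"
type_synonym link = "point \<times> point \<times> real"

definition sender :: "link \<Rightarrow> point" where "sender e = fst e"
definition receiver :: "link \<Rightarrow> point" where "receiver e = fst (snd e)"
definition power :: "link \<Rightarrow> real" where "power e = snd (snd e)"

definition dl :: "link \<Rightarrow> real" where "dl e = dist (sender e) (receiver e)"
definition dx :: "link \<Rightarrow> link \<Rightarrow> real" where "dx e' e = dist (sender e') (receiver e)"

definition S :: "real \<Rightarrow> link \<Rightarrow> real" where
  "S \<alpha> e = power e / (dl e powr \<alpha>)"

(* interference S_{e'e}; meaningful only when dx e' e > 0 (otherwise it is infinite,
   which is handled explicitly in feasible and abar below) *)
definition Sx :: "real \<Rightarrow> link \<Rightarrow> link \<Rightarrow> real" where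
  "Sx \<alpha> e' e = power e' / (dx e' e powr \<alpha>)"

definition gam :: "real \<Rightarrow> real \<Rightarrow> real \<Rightarrow> link \<Rightarrow> real" where
  "gam \<alpha> \<beta> N e = \<beta> * S \<alpha> e / (S \<alpha> e - \<beta> * N)"

definition ahat :: "real \<Rightarrow> link \<Rightarrow> link \<Rightarrow> real" where
  "ahat \<alpha> e' e = Sx \<alpha> e' e / S \<alpha> e"

definition aff :: "real \<Rightarrow> real \<Rightarrow> real \<Rightarrow> link \<Rightarrow> link \<Rightarrow> real" where
  "aff \<alpha> \<beta> N e' e = gam \<alpha> \<beta> N e * ahat \<alpha> e' e"

(* abar = min 1 a; if the sender of e' sits on the receiver of e, a is infinite, so abar = 1 *)
definition abar :: "real \<Rightarrow> real \<Rightarrow> real \<Rightarrow> link \<Rightarrow> link \<Rightarrow> real" where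
  "abar \<alpha> \<beta> N e' e = (if dx e' e = 0 then 1 else min 1 (aff \<alpha> \<beta> N e' e))"

(* SINR-feasibility; zero-distance interference is infinite, hence infeasible *)
definition feasible :: "real \<Rightarrow> real \<Rightarrow> real \<Rightarrow> link set \<Rightarrow> bool" where
  "feasible \<alpha> \<beta> N L \<longleftrightarrow>
     (\<forall>e\<in>L. (\<forall>e'\<in>L - {e}. dx e' e > 0) \<and>
             S \<alpha> e / (N + (\<Sum>e'\<in>L - {e}. Sx \<alpha> e' e)) \<ge> \<beta>)"

definition Smin :: "real \<Rightarrow> link set \<Rightarrow> real" where
  "Smin \<alpha> Ls = Min (S \<alpha> ` Ls)"

definition bucket :: "real \<Rightarrow> link set \<Rightarrow> nat \<Rightarrow> link set" where
  "bucket \<alpha> Ls i = {e\<in>Ls. 2 ^ i * Smin \<alpha> Ls \<le> S \<alpha> e \<and> S \<alpha> e < 2 ^ (i + 1) * Smin \<alpha> Ls}"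

end

theory Submission imports Defs begin

lemma S_pos_facts:
  assumes "S \<alpha> h > 0"
  shows "dl h > 0" "power h > 0"
proof -
  have "dl h \<noteq> 0" using assms by (auto simp: S_def)
  moreover have "dl h \<ge> 0" by (simp add: dl_def)
  ultimately show "dl h > 0" by simp
  then have "dl h powr \<alpha> > 0" by simp
  then show "power h > 0" using assms by (simp add: S_def zero_less_divide_iff)
qed

lemma Sx_nonneg: "power g > 0 \<Longrightarrow> Sx \<alpha> g f \<ge> 0"
  by (simp add: Sx_def)

lemma dist_tri3:
  assumes "dl f \<le> dx f e" "dx f e \<le> dx g e"
  shows "dx g f \<le> 3 * dx g e"
proof -
  have a: "dx g f \<le> dx g e + dist (receiver e) (receiver f)"
    unfolding dx_def by (rule dist_triangle)
  have b: "dist (receiver e) (receiver f) \<le> dx f e + dl f"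
    using dist_triangle[of "receiver e" "receiver f" "sender f"]
    by (simp add: dx_def dl_def dist_commute)
  show ?thesis using a b assms by linarith
qed

lemma Sx_compare:
  assumes "\<alpha> \<ge> 0" "power g > 0" "dx g f > 0" "dx g f \<le> 3 * dx g e" "dx g e > 0"
  shows "Sx \<alpha> g e \<le> 3 powr \<alpha> * Sx \<alpha> g f"
proof -
  have "dx g f powr \<alpha> \<le> (3 * dx g e) powr \<alpha>"
    using assms by (intro powr_mono2) auto
  also have "\<dots> = 3 powr \<alpha> * dx g e powr \<alpha>" using assms by (simp add: powr_mult)
  finally have h: "dx g f powr \<alpha> / 3 powr \<alpha> \<le> dx g e powr \<alpha>"
    by (simp add: divide_le_eq mult.commute)
  have p1: "dx g f powr \<alpha> / 3 powr \<alpha> > 0" using assms by auto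
  have q: "dx g e powr \<alpha> > 0" using assms by simp
  have pq: "0 < dx g e powr \<alpha> * (dx g f powr \<alpha> / 3 powr \<alpha>)" by (rule mult_pos_pos[OF q p1])
  have "power g / dx g e powr \<alpha> \<le> power g / (dx g f powr \<alpha> / 3 powr \<alpha>)"
    using divide_left_mono[OF h _ pq] assms(2) by simp
  also have "\<dots> = 3 powr \<alpha> * (power g / dx g f powr \<alpha>)" by simp
  finally show ?thesis by (simp add: Sx_def)
qed
theorem lemma3:
  fixes \<alpha> \<epsilon> :: real
  assumes "\<alpha> \<ge> 0" and "\<epsilon> > 0"
  shows "\<exists>C. \<forall>(N::real) (\<beta>::real) (Ls::link set) (i::nat) (L::link set) (e::link).
           N > 0 \<longrightarrow> \<beta> > 0 \<longrightarrow> finite Ls \<longrightarrow> Ls \<noteq> {} \<longrightarrow>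
           (\<forall>f\<in>Ls. S \<alpha> f / N \<ge> (1 + \<epsilon>) * \<beta>) \<longrightarrow>
           L \<subseteq> bucket \<alpha> Ls i \<longrightarrow> feasible \<alpha> \<beta> N L \<longrightarrow> e \<in> bucket \<alpha> Ls i \<longrightarrow>
           (\<Sum>e'\<in>{e'\<in>L. dl e' \<le> dx e' e}. abar \<alpha> \<beta> N e' e) \<le> C"
proof (intro exI allI impI)
  fix N \<beta> :: real and Ls :: "link set" and i :: nat and L :: "link set" and e :: link
  assume N: "N > 0" and b: "\<beta> > 0" and fin: "finite Ls" and ne: "Ls \<noteq> {}"
    and Sb: "\<forall>f\<in>Ls. S \<alpha> f / N \<ge> (1 + \<epsilon>) * \<beta>" and LB: "L \<subseteq> bucket \<alpha> Ls i"
    and feas: "feasible \<alpha> \<beta> N L" and eB: "e \<in> bucket \<alpha> Ls i"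
  define A where "A = {e'\<in>L. dl e' \<le> dx e' e}"
  let ?C = "1 + 2 * 3 powr \<alpha> * ((1 + \<epsilon>) / \<epsilon>)"
  have Cpos: "?C \<ge> 0" using assms by (simp add: field_simps)
  have Bsub: "bucket \<alpha> Ls i \<subseteq> Ls" by (auto simp: bucket_def)
  have finL: "finite L" using LB Bsub fin finite_subset by blast
  have finA: "finite A" using finL by (simp add: A_def)
  have Spos: "S \<alpha> h > 0" and Sge: "S \<alpha> h \<ge> (1+\<epsilon>) * \<beta> * N" if "h \<in> Ls" for h
  proof -
    have "S \<alpha> h / N \<ge> (1 + \<epsilon>) * \<beta>" using Sb that by blast
    then show "S \<alpha> h \<ge> (1+\<epsilon>) * \<beta> * N" using N by (simp add: field_simps)
    moreover have "(1+\<epsilon>) * \<beta> * N > 0" using assms b N by simp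
    ultimately show "S \<alpha> h > 0" by linarith
  qed
  have eLs: "e \<in> Ls" using eB Bsub by blast
  have ratio: "S \<alpha> g < 2 * S \<alpha> h" if "g \<in> bucket \<alpha> Ls i" "h \<in> bucket \<alpha> Ls i" for g h
    using that by (auto simp: bucket_def)
  have Se: "S \<alpha> e > 0" "S \<alpha> e \<ge> (1+\<epsilon>) * \<beta> * N" using Spos Sge eLs by auto
  have gamb: "gam \<alpha> \<beta> N e / \<beta> \<le> (1 + \<epsilon>) / \<epsilon>"
  proof -
    have d: "S \<alpha> e - \<beta> * N > 0"
    proof -
      have "(1+\<epsilon>) * \<beta> * N = \<beta> * N + \<epsilon> * \<beta> * N" by (simp add: algebra_simps)
      moreover have "\<epsilon> * \<beta> * N > 0" using assms b N by simp
      ultimately show ?thesis using Se by linarith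
    qed
    have "gam \<alpha> \<beta> N e / \<beta> = S \<alpha> e / (S \<alpha> e - \<beta> * N)" using b by (simp add: gam_def)
    also have "\<dots> \<le> (1 + \<epsilon>) / \<epsilon>"
    proof -
      have eq: "(1+\<epsilon>) * (S \<alpha> e - \<beta> * N) = S \<alpha> e * \<epsilon> + (S \<alpha> e - (1+\<epsilon>) * \<beta> * N)"
        by (simp add: algebra_simps)
      have "S \<alpha> e * \<epsilon> \<le> (1+\<epsilon>) * (S \<alpha> e - \<beta> * N)" using eq Se(2) by linarith
      then have "S \<alpha> e \<le> (1+\<epsilon>) * (S \<alpha> e - \<beta> * N) / \<epsilon>"
        by (simp add: pos_le_divide_eq[OF assms(2)])
      then show ?thesis by (simp add: pos_divide_le_eq[OF d])
    qed
    finally show ?thesis .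
  qed
  have gam0: "gam \<alpha> \<beta> N e \<ge> 0"
  proof -
    have "gam \<alpha> \<beta> N e / \<beta> \<ge> 0"
    proof -
      have "\<beta> * N < S \<alpha> e"
      proof -
        have "(1+\<epsilon>) * \<beta> * N = \<beta> * N + \<epsilon> * \<beta> * N" by (simp add: algebra_simps)
        moreover have "\<epsilon> * \<beta> * N > 0" using assms b N by simp
        ultimately show ?thesis using Se by linarith
      qed
      then show ?thesis using b Se by (simp add: gam_def)
    qed
    then show ?thesis using b by (simp add: divide_nonneg_pos zero_le_divide_iff)
  qed
  show "(\<Sum>e'\<in>{e'\<in>L. dl e' \<le> dx e' e}. abar \<alpha> \<beta> N e' e) \<le> ?C"
  proof (cases "A = {}")
    case True
    then show ?thesis using Cpos by (simp add: A_def[symmetric])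
  next
    case False
    obtain f where fA: "f \<in> A" and fmin: "\<forall>g\<in>A. dx f e \<le> dx g e"
    proof -
      define m where "m = Min ((\<lambda>g. dx g e) ` A)"
      have "m \<in> (\<lambda>g. dx g e) ` A" using finA False by (simp add: m_def)
      then obtain f where "f \<in> A" "dx f e = m" by blast
      moreover have "\<forall>g\<in>A. m \<le> dx g e" using finA by (simp add: m_def)
      ultimately show ?thesis using that by auto
    qed
    have fL: "f \<in> L" and fd: "dl f \<le> dx f e" using fA by (auto simp: A_def)
    have fLs: "f \<in> Ls" using fL LB Bsub by blast
    have Sf: "S \<alpha> f > 0" using Spos fLs by blast
    define K where "K = gam \<alpha> \<beta> N e * 3 powr \<alpha> * 2 / S \<alpha> f"
    have K0: "K \<ge> 0" using gam0 Sf by (simp add: K_def)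
    have each: "abar \<alpha> \<beta> N g e \<le> K * Sx \<alpha> g f" if gA: "g \<in> A - {f}" for g
    proof -
      have gL: "g \<in> L" and gd: "dl g \<le> dx g e" using gA by (auto simp: A_def)
      have gLs: "g \<in> Ls" using gL LB Bsub by blast
      have Sg: "S \<alpha> g > 0" using Spos gLs by blast
      have dlg: "dl g > 0" and pg: "power g > 0" using S_pos_facts[OF Sg] by auto
      have dge: "dx g e > 0" using dlg gd by linarith
      have dgf: "dx g f > 0" using feas fL gL gA by (auto simp: feasible_def)
      have tri: "dx g f \<le> 3 * dx g e" using dist_tri3[OF fd] fmin gA by auto
      have cmp: "Sx \<alpha> g e \<le> 3 powr \<alpha> * Sx \<alpha> g f"
        using Sx_compare[OF assms(1) pg dgf tri dge] .
      have Sfe: "S \<alpha> f < 2 * S \<alpha> e" using ratio fL LB eB by blast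
      have "abar \<alpha> \<beta> N g e \<le> aff \<alpha> \<beta> N g e" using dge by (simp add: abar_def)
      also have "\<dots> = gam \<alpha> \<beta> N e * Sx \<alpha> g e / S \<alpha> e" by (simp add: aff_def ahat_def)
      also have "\<dots> \<le> gam \<alpha> \<beta> N e * (3 powr \<alpha> * Sx \<alpha> g f) / S \<alpha> e"
        using gam0 cmp Se by (intro divide_right_mono mult_left_mono) auto
      also have "\<dots> \<le> gam \<alpha> \<beta> N e * (3 powr \<alpha> * Sx \<alpha> g f) * 2 / S \<alpha> f"
      proof -
        have X: "gam \<alpha> \<beta> N e * (3 powr \<alpha> * Sx \<alpha> g f) \<ge> 0"
          using gam0 Sx_nonneg[OF pg] by simp
        have "1 / S \<alpha> e \<le> 2 / S \<alpha> f" using Sfe Sf Se by (simp add: divide_simps)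
        from mult_left_mono[OF this X] show ?thesis by simp
      qed
      also have "\<dots> = K * Sx \<alpha> g f" by (simp add: K_def)
      finally show ?thesis .
    qed
    have Lpow: "power g > 0" if "g \<in> L" for g
      using S_pos_facts(2)[OF Spos] that LB Bsub by blast
    have sumL: "(\<Sum>g\<in>L - {f}. Sx \<alpha> g f) \<le> S \<alpha> f / \<beta>"
    proof -
      let ?s = "\<Sum>g\<in>L - {f}. Sx \<alpha> g f"
      have s0: "?s \<ge> 0" using Lpow Sx_nonneg by (intro sum_nonneg) auto
      have "S \<alpha> f / (N + ?s) \<ge> \<beta>" using feas fL by (simp add: feasible_def)
      then have "\<beta> * (N + ?s) \<le> S \<alpha> f" using s0 N by (simp add: divide_simps)
      moreover have "\<beta> * (N + ?s) = \<beta> * N + \<beta> * ?s" by (simp add: distrib_left)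
      moreover have "0 < \<beta> * N" using b N by simp
      ultimately have "\<beta> * ?s \<le> S \<alpha> f" by linarith
      then show ?thesis using b by (simp add: field_simps)
    qed
    have "(\<Sum>g\<in>A. abar \<alpha> \<beta> N g e) = abar \<alpha> \<beta> N f e + (\<Sum>g\<in>A - {f}. abar \<alpha> \<beta> N g e)"
      using finA fA by (simp add: sum.remove)
    also have "\<dots> \<le> 1 + (\<Sum>g\<in>A - {f}. K * Sx \<alpha> g f)"
      using each by (intro add_mono sum_mono) (auto simp: abar_def)
    also have "(\<Sum>g\<in>A - {f}. K * Sx \<alpha> g f) = K * (\<Sum>g\<in>A - {f}. Sx \<alpha> g f)"
      by (simp add: sum_distrib_left)
    also have "1 + K * (\<Sum>g\<in>A - {f}. Sx \<alpha> g f) \<le> 1 + K * (S \<alpha> f / \<beta>)"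
    proof -
      have "(\<Sum>g\<in>A - {f}. Sx \<alpha> g f) \<le> (\<Sum>g\<in>L - {f}. Sx \<alpha> g f)"
        using finL Lpow Sx_nonneg by (intro sum_mono2) (auto simp: A_def)
      then have "(\<Sum>g\<in>A - {f}. Sx \<alpha> g f) \<le> S \<alpha> f / \<beta>" using sumL by linarith
      from mult_left_mono[OF this K0] show ?thesis by (rule add_left_mono)
    qed
    also have "1 + K * (S \<alpha> f / \<beta>) = 1 + 2 * 3 powr \<alpha> * (gam \<alpha> \<beta> N e / \<beta>)"
      using Sf by (simp add: K_def)
    also have "\<dots> \<le> 1 + 2 * 3 powr \<alpha> * ((1 + \<epsilon>) / \<epsilon>)"
      using gamb by (intro add_left_mono mult_left_mono) auto
    finally show ?thesis unfolding A_def by simp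
  qed
qed

end
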